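(* Let $n\ge1$ be an integer, $\delta\in(0,1)$, and $\lambda=\frac{9n}{8\ln\frac{2}{\delta}}$. For $z\in[0,1]$ define \[ U(z)=z+\frac34\,\frac{1-2z+\sqrt{1+4\lambda z(1-z)}}{1+\lambda},\qquad L(z)=z+\frac34\,\frac{1-2z-\sqrt{1+4\lambda z(1-z)}}{1+\lambda}. \] Then $L(z)$ is monotonically increasing with respect to $z$ on the set of $z\in[0,1]$ such that $L(z)>0$. Similarly, $U(z)$ is monotonically increasing with respect to $z$ on the set of $z\in[0,1]$ such that $U(z)<1$. *)

theory Defs
  imports Complex_Main
begin

definition lam :: "nat \<Rightarrow> real \<Rightarrow> real" where
  "lam n \<delta> = 9 * real n / (8 * ln (2 / \<delta>))"

definition Ubound :: "nat \<Rightarrow> real \<Rightarrow> real \<Rightarrow> real" where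
  "Ubound n \<delta> z = z + 3/4 * (1 - 2*z + sqrt (1 + 4 * lam n \<delta> * z * (1 - z))) / (1 + lam n \<delta>)"

definition Lbound :: "nat \<Rightarrow> real \<Rightarrow> real \<Rightarrow> real" where
  "Lbound n \<delta> z = z + 3/4 * (1 - 2*z - sqrt (1 + 4 * lam n \<delta> * z * (1 - z))) / (1 + lam n \<delta>)"

end

theory Submission
  imports Defs
begin

lemma arg_nn: "(l::real) \<ge> 0 \<Longrightarrow> 0 \<le> z \<Longrightarrow> z \<le> 1 \<Longrightarrow> 0 \<le> 1 + 4*l*z*(1-z)"
proof -
  assume "l \<ge> 0" "0 \<le> z" "z \<le> 1"
  hence "0 \<le> 4*l*z*(1-z)" by (intro mult_nonneg_nonneg) auto
  thus ?thesis by simp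
qed

definition LL :: "real \<Rightarrow> real \<Rightarrow> real" where
  "LL l z = z + 3/4 * (1 - 2*z - sqrt (1 + 4 * l * z * (1 - z))) / (1 + l)"

lemma LL_pos_imp:
  assumes l: "l \<ge> 0" and z: "0 \<le> z" "z \<le> 1" and p: "LL l z > 0"
  shows "z > 3 / (4*l+1)"
proof -
  define S where "S = sqrt (1 + 4 * l * z * (1 - z))"
  have S2: "S^2 = 1 + 4 * l * z * (1 - z)" unfolding S_def
    using arg_nn[OF l z] by simp
  have S0: "S \<ge> 0" unfolding S_def using arg_nn[OF l z] by simp
  have "0 < (z + 3/4 * (1 - 2*z - S) / (1 + l)) * (4*(1+l))"
    using p l unfolding LL_def S_def[symmetric] by simp
  also have "\<dots> = (4*l-2)*z + 3 - 3*S" using l by (simp add: field_simps)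
  finally have h: "3*S < (4*l-2)*z + 3" by simp
  hence "(3*S)^2 < ((4*l-2)*z + 3)^2" using S0
    by (intro power_strict_mono) auto
  hence "0 < ((4*l-2)*z + 3)^2 - 9*S^2" by (simp add: power_mult_distrib)
  also have "\<dots> = 4*(l+1)*z*((4*l+1)*z - 3)" unfolding S2 by (simp add: algebra_simps power2_eq_square)
  finally have "0 < (4*(l+1)*z) * ((4*l+1)*z - 3)" by (simp add: mult.assoc)
  moreover have "4*(l+1)*z \<ge> 0" using l z by simp
  ultimately have "(4*l+1)*z - 3 > 0" by (metis zero_less_mult_iff not_le)
  thus ?thesis using l by (simp add: field_simps)
qed

lemma g_ineq:
  assumes l: "l \<ge> 0" and z: "0 \<le> z" "z \<le> 1" and zz: "z > 3 / (4*l+1)"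
  shows "(2*l-1) * sqrt (1 + 4 * l * z * (1 - z)) \<ge> 3*l*(1-2*z)"
proof -
  define S where "S = sqrt (1 + 4 * l * z * (1 - z))"
  have S2: "S^2 = 1 + 4 * l * z * (1 - z)" unfolding S_def
    using arg_nn[OF l z] by simp
  have S0: "S \<ge> 0" unfolding S_def using arg_nn[OF l z] by simp
  have zl: "(4*l+1)*z > 3" using zz l by (simp add: field_simps)
  show ?thesis
  proof (cases "1 - 2*z \<le> 0")
    case True
    have "(4*l+1)*z \<le> (4*l+1)" using mult_left_mono[of z 1 "4*l+1"] z l by simp
    hence "l > 1/2" using zl by linarith
    hence A: "(2*l-1)*S \<ge> 0" using S0 by simp
    have "3*l*(1-2*z) \<le> 0" using True l by (intro mult_nonneg_nonpos) auto
    thus ?thesis using A unfolding S_def[symmetric] by linarith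
  next
    case False
    define a where "a = 3/(4*l+1)"
    have a: "a < z" "0 \<le> a" using zz l unfolding a_def by auto
    have "(4*l+1)*z \<le> (4*l+1)*(1/2)" using mult_left_mono[of z "1/2" "4*l+1"] False l by simp
    hence "3 < (4*l+1)*(1/2)" using zl by linarith
    hence l54: "l > 5/4" by (simp add: algebra_simps)
    have "z*(1-z) - a*(1-a) = (z-a)*(1-z-a)" by (simp add: algebra_simps)
    also have "\<dots> \<ge> 0" using a False by simp
    finally have za: "z*(1-z) \<ge> a*(1-a)" by simp
    have pos: "4*l+1 > 0" using l by simp
    have ne: "4*l+1 \<noteq> 0" using pos by simp
    have a1: "1 - a = (4*l-2)/(4*l+1)" unfolding a_def using ne
      by (simp add: diff_divide_eq_iff eq_divide_eq)
    have "4*l*(4*l+1)*(a*(1-a)) = 4*l*((4*l+1)*a)*(1-a)" by (simp add: algebra_simps)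
    also have "(4*l+1)*a = 3" unfolding a_def using ne by (simp add: divide_eq_eq algebra_simps)
    also have "4*l*3*(1-a) = 12*l*(4*l-2)/(4*l+1)" unfolding a1 by simp
    finally have "4*l*(4*l+1)*(a*(1-a)) = 12*l*(4*l-2)/(4*l+1)" .
    also have "\<dots> \<ge> 5*l-1"
    proof -
      have "28*l^2 - 25*l + 1 \<ge> 0"
      proof -
        have "28*l^2 - 25*l + 1 = l*(28*l - 25) + 1" by (simp add: algebra_simps power2_eq_square)
        also have "\<dots> \<ge> 0" using l54 by (simp add: mult_nonneg_nonneg)
        finally show ?thesis .
      qed
      hence "12*l*(4*l-2) \<ge> (5*l-1)*(4*l+1)" by (simp add: algebra_simps power2_eq_square)
      thus ?thesis using l by (simp add: field_simps)
    qed
    finally have "4*l*(4*l+1)*(z*(1-z)) \<ge> 5*l-1"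
      using mult_left_mono[OF za, of "4*l*(4*l+1)"] l by simp
    hence "(l+1)*(4*l*(4*l+1)*(z*(1-z)) - (5*l-1)) \<ge> 0" using l by simp
    moreover have "((2*l-1)*S)^2 - (3*l*(1-2*z))^2 = (2*l-1)^2 * (1 + 4*l*z*(1-z)) - (3*l*(1-2*z))^2"
      by (simp add: power_mult_distrib S2)
    moreover have "(2*l-1)^2 * (1 + 4*l*z*(1-z)) - (3*l*(1-2*z))^2 = (l+1)*(4*l*(4*l+1)*(z*(1-z)) - (5*l-1))"
      by (simp add: algebra_simps power2_eq_square)
    ultimately have "((2*l-1)*S)^2 - (3*l*(1-2*z))^2 \<ge> 0" by simp
    hence "(3*l*(1-2*z))^2 \<le> ((2*l-1)*S)^2" by simp
    moreover have "(2*l-1)*S \<ge> 0" using l54 S0 by simp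
    ultimately show ?thesis unfolding S_def[symmetric]
      using power2_le_imp_le by blast
  qed
qed

lemma LL_mono:
  assumes l: "l \<ge> 0" and x: "0 \<le> x" and xy: "x \<le> y" and y: "y \<le> 1"
    and px: "x > 3 / (4*l+1)" and py: "y > 3 / (4*l+1)"
  shows "LL l x \<le> LL l y"
proof -
  define Sx where "Sx = sqrt (1 + 4 * l * x * (1 - x))"
  define Sy where "Sy = sqrt (1 + 4 * l * y * (1 - y))"
  have Sx2: "Sx^2 = 1 + 4 * l * x * (1 - x)" unfolding Sx_def
    using x xy y l by (intro real_sqrt_pow2) (simp add: mult_nonneg_nonneg)
  have Sy2: "Sy^2 = 1 + 4 * l * y * (1 - y)" unfolding Sy_def
    using x xy y l by (intro real_sqrt_pow2) (simp add: mult_nonneg_nonneg)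
  have Sx1: "Sx \<ge> 1" unfolding Sx_def using x xy y l by (simp add: mult_nonneg_nonneg)
  have Sy1: "Sy \<ge> 1" unfolding Sy_def using x xy y l by (simp add: mult_nonneg_nonneg)
  have gx: "(2*l-1)*Sx \<ge> 3*l*(1-2*x)" unfolding Sx_def using g_ineq[OF l x _ px] xy y by simp
  have gy: "(2*l-1)*Sy \<ge> 3*l*(1-2*y)" unfolding Sy_def using g_ineq[OF l _ y py] x xy by simp
  have "(Sy - Sx)*(Sx+Sy) = 4*l*(y-x)*(1-x-y)"
    using Sx2 Sy2 by (simp add: algebra_simps power2_eq_square)
  have key: "3*(Sy - Sx)*(Sx+Sy) \<le> (y-x)*(4*l-2)*(Sx+Sy)"
  proof -
    have "3*(Sy - Sx)*(Sx+Sy) = (y-x)*(2*(3*l*(1-2*x)) + 2*(3*l*(1-2*y)))"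
      using Sx2 Sy2 by (simp add: algebra_simps power2_eq_square)
    also have "\<dots> \<le> (y-x)*(2*((2*l-1)*Sx) + 2*((2*l-1)*Sy))"
      using gx gy xy by (intro mult_left_mono) auto
    also have "\<dots> = (y-x)*(4*l-2)*(Sx+Sy)" by (simp add: algebra_simps)
    finally show ?thesis .
  qed
  have "3*(Sy - Sx) \<le> (y-x)*(4*l-2)"
    by (rule mult_right_le_imp_le[OF key]) (use Sx1 Sy1 in simp)
  hence "(x*(4*l-2) + 3 - 3*Sx)/(4*(1+l)) \<le> (y*(4*l-2) + 3 - 3*Sy)/(4*(1+l))"
    using l by (intro divide_right_mono) (auto simp: algebra_simps)
  moreover have "LL l x = (x*(4*l-2) + 3 - 3*Sx)/(4*(1+l))"
    unfolding LL_def Sx_def[symmetric] using l by (simp add: field_simps)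
  moreover have "LL l y = (y*(4*l-2) + 3 - 3*Sy)/(4*(1+l))"
    unfolding LL_def Sy_def[symmetric] using l by (simp add: field_simps)
  ultimately show ?thesis by simp
qed

lemma LL_mono_on:
  assumes l: "l \<ge> 0"
  shows "mono_on {z. 0 \<le> z \<and> z \<le> 1 \<and> LL l z > 0} (LL l)"
proof (rule mono_onI)
  fix x y assume "x \<in> {z. 0 \<le> z \<and> z \<le> 1 \<and> LL l z > 0}" "y \<in> {z. 0 \<le> z \<and> z \<le> 1 \<and> LL l z > 0}" "x \<le> y"
  thus "LL l x \<le> LL l y" using LL_mono[OF l] LL_pos_imp[OF l] by auto
qed

theorem lemma2:
  fixes n :: nat and \<delta> :: real
  assumes "n \<ge> 1" and "0 < \<delta>" and "\<delta> < 1"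
  shows "mono_on {z. 0 \<le> z \<and> z \<le> 1 \<and> Lbound n \<delta> z > 0} (Lbound n \<delta>)
       \<and> mono_on {z. 0 \<le> z \<and> z \<le> 1 \<and> Ubound n \<delta> z < 1} (Ubound n \<delta>)"
proof -
  define l where "l = lam n \<delta>"
  have "2/\<delta> > 1" using assms by simp
  hence "ln (2/\<delta>) > 0" by (intro ln_gt_zero)
  hence l: "l \<ge> 0" unfolding l_def lam_def by simp
  have LE: "Lbound n \<delta> = LL l" unfolding l_def by (auto simp: Lbound_def LL_def)
  have UE: "Ubound n \<delta> z = 1 - LL l (1 - z)" for z
  proof -
    have "4 * l * (1-z) * (1 - (1-z)) = 4 * l * z * (1 - z)" by (simp add: algebra_simps)
    thus ?thesis unfolding l_def Ubound_def LL_def using l l_def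
      by (simp add: field_simps)
  qed
  have U: "mono_on {z. 0 \<le> z \<and> z \<le> 1 \<and> Ubound n \<delta> z < 1} (Ubound n \<delta>)"
  proof (rule mono_onI)
    fix x y assume A: "x \<in> {z. 0 \<le> z \<and> z \<le> 1 \<and> Ubound n \<delta> z < 1}"
      "y \<in> {z. 0 \<le> z \<and> z \<le> 1 \<and> Ubound n \<delta> z < 1}" "x \<le> y"
    hence "LL l (1-y) \<le> LL l (1-x)"
      using LL_mono_on[OF l] unfolding mono_on_def UE by auto
    thus "Ubound n \<delta> x \<le> Ubound n \<delta> y" unfolding UE by simp
  qed
  show ?thesis using LL_mono_on[OF l] U unfolding LE by simp
qed

end
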